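(* Let $k\ge3$ and $n\ge k+2$, let $\ell=\lceil n/(k+1)\rceil-1$, and let $\mathcal{X}_{n,k}=(Q,\Sigma,\delta)$ with $Q=\{0,\dots,n-1\}$, $\Sigma=\{a_1,\dots,a_k\}$ and $\delta$ defined by: for each $0\le i\le\ell-1$ and $1\le j\le k$, $\delta((k+1)i,a_j)=(k+1)i+j$ and $\delta((k+1)i+1,a_1)=(k+1)(i+1)$; for each $i$ with $(k+1)\ell\le i\le n-2$, $\delta(i,a_1)=i+1$; and $\delta(i,a_j)=0$ for all remaining pairs $(i,a_j)$. Then $\mathcal{X}_{n,k}$ (which is the decoder of a maximal finite prefix code over $\Sigma$) is synchronizing and its reset threshold equals $2\ell+2=2\lceil n/(k+1)\rceil$.
   Context: For a DFA $(Q,\Sigma,\delta)$ with transitions extended to words, a reset word is a word $w$ with $|\{\delta(q,w)\mid q\in Q\}|=1$; the DFA is synchronizing if one exists, and its reset threshold is the length of a shortest reset word. *)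

theory Defs
  imports Complex_Main
begin

definition delta_word :: "('q \<Rightarrow> 'a \<Rightarrow> 'q) \<Rightarrow> 'q \<Rightarrow> 'a list \<Rightarrow> 'q" where
  "delta_word delta q w = foldl delta q w"

definition reset_word :: "'q set \<Rightarrow> 'a set \<Rightarrow> ('q \<Rightarrow> 'a \<Rightarrow> 'q) \<Rightarrow> 'a list \<Rightarrow> bool" where
  "reset_word Q Alph delta w \<longleftrightarrow>
     set w \<subseteq> Alph \<and> card ((\<lambda>q. delta_word delta q w) ` Q) = 1"

definition synchronizing :: "'q set \<Rightarrow> 'a set \<Rightarrow> ('q \<Rightarrow> 'a \<Rightarrow> 'q) \<Rightarrow> bool" where
  "synchronizing Q Alph delta \<longleftrightarrow> (\<exists>w. reset_word Q Alph delta w)"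

definition reset_threshold :: "'q set \<Rightarrow> 'a set \<Rightarrow> ('q \<Rightarrow> 'a \<Rightarrow> 'q) \<Rightarrow> nat" where
  "reset_threshold Q Alph delta = (LEAST m. \<exists>w. reset_word Q Alph delta w \<and> length w = m)"

text \<open>The automaton X_{n,k}: states {0..n-1}, letters a_1..a_k encoded as 1..k.\<close>

definition X_ell :: "nat \<Rightarrow> nat \<Rightarrow> nat" where
  "X_ell n k = nat \<lceil>real n / real (k + 1)\<rceil> - 1"

definition X_states :: "nat \<Rightarrow> nat set" where
  "X_states n = {0..<n}"

definition X_alphabet :: "nat \<Rightarrow> nat set" where
  "X_alphabet k = {1..k}"

definition X_delta :: "nat \<Rightarrow> nat \<Rightarrow> nat \<Rightarrow> nat \<Rightarrow> nat" where
  "X_delta n k q a =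
     (let l = X_ell n k in
      if (\<exists>i<l. q = (k+1)*i) \<and> 1 \<le> a \<and> a \<le> k then q + a
      else if (\<exists>i<l. q = (k+1)*i + 1) \<and> a = 1 then q + k
      else if (k+1)*l \<le> q \<and> q \<le> n - 2 \<and> a = 1 then q + 1
      else 0)"

end

theory Submission
  imports Defs
begin

lemma ell_facts:
  fixes n k :: nat
  assumes "k \<ge> 3" and "n \<ge> k + 2"
  shows "X_ell n k \<ge> 1" "(k+1) * X_ell n k < n"
    "X_ell n k + 1 = nat \<lceil>real n / real (k + 1)\<rceil>"
proof -
  define c where "c = \<lceil>real n / real (k + 1)\<rceil>"
  have kp: "real (k+1) > 0" by simp
  have c1: "real_of_int c \<ge> real n / real (k+1)" unfolding c_def by simp
  have c2: "real_of_int c < real n / real (k+1) + 1" unfolding c_def by linarith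
  have "real n / real (k+1) > 1" using assms kp by (simp add: field_simps)
  hence cge: "c \<ge> 2" using c1 by linarith
  have "real_of_int (c - 1) * real (k+1) < real n"
    using c2 kp by (simp add: field_simps)
  hence lt: "(c - 1) * int (k+1) < int n"
    by (metis of_int_less_iff of_int_mult of_int_of_nat_eq)
  have el: "X_ell n k = nat (c - 1)" unfolding X_ell_def c_def[symmetric] using cge by simp
  show "X_ell n k \<ge> 1" using el cge by simp
  show "(k+1) * X_ell n k < n" using el lt cge
    by (smt (verit, ccfv_SIG) int_nat_eq mult.commute of_nat_less_iff of_nat_mult)
  show "X_ell n k + 1 = nat \<lceil>real n / real (k + 1)\<rceil>" using el cge unfolding c_def[symmetric] by simp
qed

lemma ex_mult_iff:
  fixes k l q :: nat
  shows "(\<exists>i<l. q = (k+1)*i) \<longleftrightarrow> (q mod (k+1) = 0 \<and> q < (k+1)*l)"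
proof
  assume "\<exists>i<l. q = (k+1)*i"
  then obtain i where il: "i < l" and qi: "q = (k+1)*i" by blast
  have lt: "(k+1)*i < (k+1)*l" using il by (rule mult_less_mono2) simp
  have m: "((k+1)*i) mod (k+1) = 0" by (rule mod_mult_self1_is_0)
  show "q mod (k+1) = 0 \<and> q < (k+1)*l" unfolding qi using m lt by (rule conjI)
next
  assume a: "q mod (k+1) = 0 \<and> q < (k+1)*l"
  have q: "q = (k+1) * (q div (k+1))" using mult_div_mod_eq[of "k+1" q] a by simp
  have "(k+1) * (q div (k+1)) < (k+1) * l" using a q by simp
  hence "q div (k+1) < l" by (subst (asm) mult_less_cancel1) simp
  then show "\<exists>i<l. q = (k+1)*i" using q by blast
qed

lemma ex_mult1_iff:
  fixes k l q :: nat
  assumes "k \<ge> 1"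
  shows "(\<exists>i<l. q = (k+1)*i+1) \<longleftrightarrow> (q mod (k+1) = 1 \<and> q < (k+1)*l)"
proof
  assume "\<exists>i<l. q = (k+1)*i+1"
  then obtain i where i: "i < l" "q = (k+1)*i+1" by blast
  have "q < (k+1)*(i+1)" using i assms by simp
  also have "\<dots> \<le> (k+1)*l" using i by (intro mult_le_mono2) simp
  finally have "q < (k+1)*l" .
  moreover have "((k+1)*i + 1) mod (k+1) = 1" using assms
  proof -
    have "((k+1)*i + 1) mod (k+1) = (1 + (k+1)*i) mod (k+1)" by (simp only: add.commute)
    also have "\<dots> = 1 mod (k+1)" by (rule mod_mult_self2)
    also have "\<dots> = 1" using assms by simp
    finally show ?thesis .
  qed
  ultimately show "q mod (k+1) = 1 \<and> q < (k+1)*l" using i(2) by simp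
next
  assume a: "q mod (k+1) = 1 \<and> q < (k+1)*l"
  have q: "q = (k+1) * (q div (k+1)) + 1" using mult_div_mod_eq[of "k+1" q] a by simp
  have "(k+1) * (q div (k+1)) < (k+1) * l" using a q by linarith
  hence "q div (k+1) < l" by (subst (asm) mult_less_cancel1) simp
  then show "\<exists>i<l. q = (k+1)*i+1" using q by blast
qed

lemma delta_eq:
  assumes "k \<ge> 1" "l = X_ell n k"
  shows "X_delta n k q a =
      (if q mod (k+1) = 0 \<and> q < (k+1)*l \<and> 1 \<le> a \<and> a \<le> k then q + a
      else if q mod (k+1) = 1 \<and> q < (k+1)*l \<and> a = 1 then q + k
      else if (k+1)*l \<le> q \<and> q \<le> n - 2 \<and> a = 1 then q + 1
      else 0)"
  unfolding X_delta_def Let_def assms(2)[symmetric]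
  using ex_mult_iff[of l q k] ex_mult1_iff[OF assms(1), of l q] by simp


lemma divmod_form:
  fixes K i r :: nat
  assumes "r < K"
  shows "(K*i + r) div K = i" "(K*i + r) mod K = r"
proof -
  have K: "K > 0" using assms by simp
  show "(K*i + r) div K = i" using assms K by (simp add: add.commute)
  show "(K*i + r) mod K = r" using assms K by (simp add: add.commute)
qed

definition dep :: "nat \<Rightarrow> nat \<Rightarrow> nat \<Rightarrow> nat" where
  "dep k l q = (if q < (k+1)*l then 2*(q div (k+1)) + (if q mod (k+1) = 0 then 0 else 1)
     else 2*l + (q - (k+1)*l))"

context
  fixes n k l :: nat
  assumes k3: "k \<ge> 3" and lX: "l = X_ell n k" and l1: "l \<ge> 1" and ln: "(k+1)*l < n"
begin

lemma k1: "k \<ge> 1" using k3 by simp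

lemma n2: "n \<ge> 2"
proof -
  have "(k+1)*1 \<le> (k+1)*l" using l1 by (intro mult_le_mono2)
  thus ?thesis using ln k3 by simp
qed

lemma delta_in:
  assumes "i < l" "r < k+1" "1 \<le> a" "a \<le> k"
  shows "X_delta n k ((k+1)*i + r) a =
    (if r = 0 then (k+1)*i + a else if r = 1 \<and> a = 1 then (k+1)*(i+1) else 0)"
proof -
  have "(k+1)*i + r < (k+1)*(i+1)" using assms by simp
  also have "\<dots> \<le> (k+1)*l" using assms by (intro mult_le_mono2) simp
  finally have lt: "(k+1)*i + r < (k+1)*l" .
  have m: "((k+1)*i + r) mod (k+1) = r" using divmod_form[OF assms(2)] by simp
  show ?thesis using lt m assms unfolding delta_eq[OF k1 lX] using k3 by auto
qed

lemma delta_tail: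
  assumes "1 \<le> a" "a \<le> k"
  shows "X_delta n k ((k+1)*l + t) a =
    (if (k+1)*l + t \<le> n - 2 \<and> a = 1 then (k+1)*l + t + 1 else 0)"
  unfolding delta_eq[OF k1 lX] using k3 by auto

lemma dep_in:
  assumes "i < l" "r < k+1"
  shows "dep k l ((k+1)*i + r) = 2*i + (if r = 0 then 0 else 1)"
proof -
  have "(k+1)*i + r < (k+1)*(i+1)" using assms by simp
  also have "\<dots> \<le> (k+1)*l" using assms by (intro mult_le_mono2) simp
  finally have lt: "(k+1)*i + r < (k+1)*l" .
  show ?thesis unfolding dep_def using lt divmod_form[OF assms(2), of i] by simp
qed

lemma dep_tail: "dep k l ((k+1)*l + t) = 2*l + t"
  unfolding dep_def by simp

lemma dep_zero_iff: "dep k l q = 0 \<longleftrightarrow> q = 0"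
proof
  assume "q = 0" thus "dep k l q = 0" unfolding dep_def using l1 by simp
next
  assume d: "dep k l q = 0"
  show "q = 0"
  proof (cases "q < (k+1)*l")
    case True
    hence "q div (k+1) = 0" "q mod (k+1) = 0" using d unfolding dep_def by (auto split: if_splits)
    thus ?thesis by (metis div_mult_mod_eq mult_0 add_0)
  next
    case False thus ?thesis using d l1 unfolding dep_def by simp
  qed
qed

lemma step:
  assumes "q < (k+1)*l" "1 \<le> a" "a \<le> k"
  shows "(X_delta n k q a = 0 \<and> odd (dep k l q)) \<or> dep k l (X_delta n k q a) = dep k l q + 1"
proof -
  define i where "i = q div (k+1)"
  define r where "r = q mod (k+1)"
  have q: "q = (k+1)*i + r" unfolding i_def r_def by (rule mult_div_mod_eq[symmetric])
  have r: "r < k+1" unfolding r_def by simp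
  have "(k+1)*i < (k+1)*l" using assms(1) q by linarith
  hence il: "i < l" by (subst (asm) mult_less_cancel1) simp
  have dq: "dep k l q = 2*i + (if r = 0 then 0 else 1)" using dep_in[OF il r] q by simp
  have dl: "X_delta n k q a =
    (if r = 0 then (k+1)*i + a else if r = 1 \<and> a = 1 then (k+1)*(i+1) else 0)"
    using delta_in[OF il r assms(2,3)] q by simp
  show ?thesis
  proof (cases "r = 0")
    case True
    have "a < k+1" using assms by simp
    from dep_in[OF il this] have "dep k l ((k+1)*i + a) = 2*i+1" using assms by simp
    thus ?thesis using dl dq True by simp
  next
    case r0: False
    show ?thesis
    proof (cases "r = 1 \<and> a = 1")
      case True
      have "dep k l ((k+1)*(i+1)) = 2*(i+1)"
      proof (cases "i + 1 < l")
        case True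
        from dep_in[OF True, of 0] show ?thesis by simp
      next
        case False
        hence "i + 1 = l" using il by simp
        thus ?thesis using dep_tail[of 0] by simp
      qed
      thus ?thesis using dl dq True by simp
    next
      case False
      have "X_delta n k q a = 0" using dl r0 False by (simp only: if_False if_True)
      thus ?thesis using dq r0 by simp
    qed
  qed
qed

lemma dep_big: "dep k l q < 2*l \<Longrightarrow> q < (k+1)*l"
  unfolding dep_def by (auto split: if_splits)

lemma parity:
  "\<forall>x y. set v \<subseteq> {1..k} \<longrightarrow> dep k l x + length v \<le> 2*l \<longrightarrow> dep k l y + length v \<le> 2*l
     \<longrightarrow> odd (dep k l x + dep k l y)
     \<longrightarrow> odd (dep k l (delta_word (X_delta n k) x v) + dep k l (delta_word (X_delta n k) y v))"
proof (induction v)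
  case Nil
  then show ?case by (simp add: delta_word_def)
next
  case (Cons a v)
  show ?case
  proof (intro allI impI)
    fix x y
    assume s: "set (a # v) \<subseteq> {1..k}" and bx: "dep k l x + length (a # v) \<le> 2 * l"
      and by': "dep k l y + length (a # v) \<le> 2 * l" and od: "odd (dep k l x + dep k l y)"
    have a: "1 \<le> a" "a \<le> k" using s by auto
    have xl: "x < (k+1)*l" using bx by (intro dep_big) simp
    have yl: "y < (k+1)*l" using by' by (intro dep_big) simp
    define x' where "x' = X_delta n k x a"
    define y' where "y' = X_delta n k y a"
    have sx: "(x' = 0 \<and> odd (dep k l x)) \<or> dep k l x' = dep k l x + 1"
      unfolding x'_def by (rule step[OF xl a])
    have sy: "(y' = 0 \<and> odd (dep k l y)) \<or> dep k l y' = dep k l y + 1"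
      unfolding y'_def by (rule step[OF yl a])
    have d0: "dep k l 0 = 0" using dep_zero_iff by simp
    have "dep k l x' + length v \<le> 2*l \<and> dep k l y' + length v \<le> 2*l \<and> odd (dep k l x' + dep k l y')"
      using sx sy bx by' od d0 by auto
    hence "odd (dep k l (delta_word (X_delta n k) x' v) + dep k l (delta_word (X_delta n k) y' v))"
      using Cons.IH s by auto
    thus "odd (dep k l (delta_word (X_delta n k) x (a # v)) + dep k l (delta_word (X_delta n k) y (a # v)))"
      unfolding x'_def y'_def by (simp add: delta_word_def)
  qed
qed


abbreviation dw where "dw q w \<equiv> delta_word (X_delta n k) q w"

lemma dw_Cons: "dw q (a # w) = dw (X_delta n k q a) w"
  by (simp add: delta_word_def)

lemma dw_Nil: "dw q [] = q"
  by (simp add: delta_word_def)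

lemma dw_append: "dw q (u @ w) = dw (dw q u) w"
  by (simp add: delta_word_def)

lemma spine_step:
  assumes "e < 2*l"
  shows "X_delta n k ((k+1)*(e div 2) + e mod 2) 1 = (k+1)*((e+1) div 2) + (e+1) mod 2"
proof -
  have il: "e div 2 < l" using assms by simp
  have r: "e mod 2 < k+1" using k3 by simp
  have d: "X_delta n k ((k+1)*(e div 2) + e mod 2) 1 =
    (if e mod 2 = 0 then (k+1)*(e div 2) + 1 else if e mod 2 = 1 \<and> (1::nat) = 1 then (k+1)*(e div 2+1) else 0)"
    using delta_in[OF il r, of 1] k3 by simp
  show ?thesis
  proof (cases "even e")
    case True
    hence "(e+1) div 2 = e div 2" "(e+1) mod 2 = 1" "e mod 2 = 0" by presburger+
    thus ?thesis using d True by simp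
  next
    case False
    hence "(e+1) div 2 = e div 2 + 1" "(e+1) mod 2 = 0" "e mod 2 = 1" by presburger+
    thus ?thesis using d False by simp
  qed
qed

lemma spine_run:
  "e + m \<le> 2*l \<Longrightarrow> dw ((k+1)*(e div 2) + e mod 2) (replicate m 1) = (k+1)*((e+m) div 2) + (e+m) mod 2"
proof (induction m arbitrary: e)
  case 0
  then show ?case by (simp add: dw_Nil)
next
  case (Suc m)
  have "e < 2*l" using Suc.prems by simp
  hence "dw ((k+1)*(e div 2) + e mod 2) (replicate (Suc m) 1)
      = dw ((k+1)*((e+1) div 2) + (e+1) mod 2) (replicate m 1)"
    using spine_step[OF \<open>e < 2*l\<close>] by (simp only: dw_Cons replicate_Suc)
  also have "\<dots> = (k+1)*((e+1+m) div 2) + (e+1+m) mod 2"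
    using Suc.IH[of "e+1"] Suc.prems by simp
  finally show ?case by simp
qed

lemma fe_last:
  assumes "1 \<le> b" "b \<le> k"
  shows "X_delta n k (n-1) b = 0"
proof -
  have "n - 1 = (k+1)*l + (n-1-(k+1)*l)" using ln by simp
  hence "X_delta n k (n-1) b = X_delta n k ((k+1)*l + (n-1-(k+1)*l)) b" by simp
  also have "\<dots> = 0"
  proof -
    have e: "(k+1)*l + (n-1-(k+1)*l) = n - 1" using ln by simp
    have "n - 2 < n - 1" using n2 by simp
    hence "\<not> (k+1)*l + (n-1-(k+1)*l) \<le> n - 2" unfolding e by simp
    thus ?thesis unfolding delta_tail[OF assms] by simp
  qed
  finally show ?thesis .
qed

lemma fe_small:
  assumes "2 \<le> j" "j \<le> k" "1 \<le> b" "b \<le> k"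
  shows "X_delta n k j b = 0"
  using delta_in[of 0 j b] assms l1 by simp

lemma delta_zero:
  assumes "1 \<le> a" "a \<le> k"
  shows "X_delta n k 0 a = a"
  using delta_in[of 0 0 a] assms l1 by simp

lemma dep_small:
  assumes "1 \<le> a" "a \<le> k"
  shows "dep k l a = 1"
  using dep_in[of 0 a] assms l1 by simp

lemma merge:
  assumes "x \<noteq> 0" "\<And>b. 1 \<le> b \<Longrightarrow> b \<le> k \<Longrightarrow> X_delta n k x b = 0"
    "set v \<subseteq> {1..k}" "length v \<le> 2*l"
  shows "dw 0 v \<noteq> dw x v"
proof (cases v)
  case Nil
  then show ?thesis using assms by (simp add: dw_Nil)
next
  case (Cons b u)
  have b: "1 \<le> b" "b \<le> k" using assms(3) Cons by auto
  have e1: "dw 0 v = dw b u" using Cons delta_zero[OF b] by (simp add: dw_Cons)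
  have e2: "dw x v = dw 0 u" using Cons assms(2)[OF b] by (simp add: dw_Cons)
  have d0: "dep k l 0 = 0" using dep_zero_iff by simp
  have "odd (dep k l (dw b u) + dep k l (dw 0 u))"
    using parity[of u] assms(3,4) Cons dep_small[OF b] d0 by auto
  hence "dw b u \<noteq> dw 0 u" by auto
  thus ?thesis using e1 e2 by simp
qed

lemma lower:
  assumes "reset_word (X_states n) (X_alphabet k) (X_delta n k) w"
  shows "2*l + 2 \<le> length w"
proof (rule ccontr)
  assume len: "\<not> 2*l + 2 \<le> length w"
  have sw: "set w \<subseteq> {1..k}" and c: "card ((\<lambda>q. dw q w) ` {0..<n}) = 1"
    using assms unfolding reset_word_def X_states_def X_alphabet_def by auto
  have same: "\<And>y z. y < n \<Longrightarrow> z < n \<Longrightarrow> dw y w = dw z w"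
  proof -
    fix y z assume "y < n" "z < n"
    from c obtain c0 where "(\<lambda>q. dw q w) ` {0..<n} = {c0}" by (rule card_1_singletonE)
    moreover have "dw y w \<in> (\<lambda>q. dw q w) ` {0..<n}" "dw z w \<in> (\<lambda>q. dw q w) ` {0..<n}"
      using \<open>y < n\<close> \<open>z < n\<close> by simp_all
    ultimately have "dw y w \<in> {c0}" "dw z w \<in> {c0}" by simp_all
    thus "dw y w = dw z w" by simp
  qed
  show False
  proof (cases w)
    case Nil
    then show ?thesis using same[of "n-1" 0] n2 by (simp add: dw_Nil)
  next
    case (Cons a v)
    have a: "1 \<le> a" "a \<le> k" using sw Cons by auto
    have sv: "set v \<subseteq> {1..k}" "length v \<le> 2*l" using sw Cons len by auto
    have ey: "dw (n-1) w = dw 0 v" using Cons fe_last[OF a] by (simp add: dw_Cons)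
    show False
    proof (cases "a = 1")
      case True
      obtain z where z: "z < n" "X_delta n k z 1 = n - 1"
      proof (cases "(k+1)*l \<le> n - 2")
        case True
        have "n - 2 = (k+1)*l + (n-2-(k+1)*l)" using True by simp
        hence "X_delta n k (n-2) 1 = X_delta n k ((k+1)*l + (n-2-(k+1)*l)) 1" by simp
        also have "\<dots> = n - 1" unfolding delta_tail[OF order_refl k1] using True n2 by simp
        finally have "X_delta n k (n-2) 1 = n - 1" .
        moreover have "n - 2 < n" using n2 by simp
        ultimately show ?thesis using that by blast
      next
        case False
        hence nl: "(k+1)*l = n - 1" using ln by simp
        have il: "l - 1 < l" using l1 by simp
        have "X_delta n k ((k+1)*(l-1) + 1) 1 = (k+1)*(l-1+1)"
          using delta_in[OF il _ order_refl k1, of 1] k3 by simp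
        also have "\<dots> = n - 1" using nl l1 by simp
        finally have e: "X_delta n k ((k+1)*(l-1) + 1) 1 = n - 1" .
        have "(k+1)*(l-1) + 1 \<le> (k+1)*(l-1) + (k+1)" by simp
        also have "\<dots> = (k+1)*l" using l1
          by (metis Suc_diff_1 add.commute less_le_trans mult_Suc_right zero_less_one)
        finally have "(k+1)*(l-1) + 1 < n" using ln by simp
        thus ?thesis using that e by blast
      qed
      have ez: "dw z w = dw (n-1) v" using Cons True z by (simp add: dw_Cons)
      have "dw 0 v \<noteq> dw (n-1) v"
        by (rule merge) (use n2 fe_last sv in auto)
      thus False using same[of "n-1" z] ey ez z n2 by simp
    next
      case False
      have ez: "dw 0 w = dw a v" using Cons delta_zero[OF a] by (simp add: dw_Cons)
      have "dw 0 v \<noteq> dw a v"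
        by (rule merge) (use a False fe_small sv in auto)
      thus False using same[of "n-1" 0] ey ez n2 by simp
    qed
  qed
qed

lemma upper:
  "reset_word (X_states n) (X_alphabet k) (X_delta n k) (2 # 1 # replicate (2*l - 1) 1 @ [2])"
proof -
  define w where "w = (2::nat) # 1 # replicate (2*l - 1) 1 @ [2]"
  have sw: "set w \<subseteq> {1..k}" unfolding w_def using k3 by auto
  have two: "X_delta n k ((k+1)*l) 2 = 0" using delta_tail[of 2 0] k3 by simp
  have two': "X_delta n k ((k+1)*(l-1) + 1) 2 = 0"
    using delta_in[of "l-1" 1 2] k3 l1 by simp
  have s0: "dw 0 (replicate (2*l - 1) 1) = (k+1)*(l-1) + 1"
  proof -
    have "dw ((k+1)*(0 div 2) + 0 mod 2) (replicate (2*l - 1) 1) = (k+1)*((0 + (2*l-1)) div 2) + (0 + (2*l-1)) mod 2"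
      by (rule spine_run) (use l1 in simp)
    moreover have "(2*l-1) div 2 = l - 1" "(2*l-1) mod 2 = 1" using l1 by presburger+
    ultimately show ?thesis by simp
  qed
  have s1: "dw 1 (replicate (2*l - 1) 1) = (k+1)*l"
  proof -
    have "dw ((k+1)*(1 div 2) + 1 mod 2) (replicate (2*l - 1) 1) = (k+1)*((1 + (2*l-1)) div 2) + (1 + (2*l-1)) mod 2"
      by (rule spine_run) (use l1 in simp)
    moreover have "1 + (2*l-1) = 2*l" using l1 by simp
    ultimately show ?thesis by simp
  qed
  have mid: "dw q [2, 1] \<in> {0, 1}" for q
  proof (cases "q mod (k+1) = 0 \<and> q < (k+1)*l")
    case True
    define i where "i = q div (k+1)"
    have q: "q = (k+1)*i + 0" unfolding i_def using True by (metis add_0_right mult_div_mod_eq)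
    have "(k+1)*i < (k+1)*l" using True q by simp
    hence il: "i < l" by (subst (asm) mult_less_cancel1) simp
    have "X_delta n k q 2 = (k+1)*i + 2" using delta_in[OF il _ _, of 0 2] q k3 by simp
    moreover have "X_delta n k ((k+1)*i + 2) 1 = 0" using delta_in[OF il, of 2 1] k3 by simp
    ultimately show ?thesis by (simp add: dw_Cons dw_Nil)
  next
    case False
    have "X_delta n k q 2 = 0" using False unfolding delta_eq[OF k1 lX] by auto
    moreover have "X_delta n k 0 1 = 1" using delta_zero[of 1] k1 by simp
    ultimately show ?thesis by (simp add: dw_Cons dw_Nil)
  qed
  have all0: "dw q w = 0" for q
  proof -
    have "dw q w = dw (dw (dw q [2,1]) (replicate (2*l - 1) 1)) [2]"
      unfolding w_def by (simp add: dw_Cons dw_append dw_Nil)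
    thus ?thesis using mid[of q] s0 s1 two two' by (auto simp add: dw_Cons dw_Nil)
  qed
  have "(\<lambda>q. dw q w) ` {0..<n} = {0}" using all0 ln by auto
  thus ?thesis using sw unfolding reset_word_def X_states_def X_alphabet_def w_def by simp
qed

end

theorem theorem7:
  fixes n k :: nat
  assumes "k \<ge> 3" and "n \<ge> k + 2"
  shows "synchronizing (X_states n) (X_alphabet k) (X_delta n k)
     \<and> reset_threshold (X_states n) (X_alphabet k) (X_delta n k) = 2 * X_ell n k + 2
     \<and> 2 * X_ell n k + 2 = 2 * nat \<lceil>real n / real (k + 1)\<rceil>"
proof -
  note E = ell_facts[OF assms]
  define l where "l = X_ell n k"
  have l1: "l \<ge> 1" and ln: "(k+1)*l < n" using E unfolding l_def by auto
  note up = upper[OF assms(1) l_def l1 ln]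
  note lo = lower[OF assms(1) l_def l1 ln]
  let ?w = "2 # 1 # replicate (2*l - 1) 1 @ [2::nat]"
  have lw: "length ?w = 2*l + 2" using l1 by simp
  have sync: "synchronizing (X_states n) (X_alphabet k) (X_delta n k)"
    unfolding synchronizing_def using up by blast
  have rt: "reset_threshold (X_states n) (X_alphabet k) (X_delta n k) = 2*l + 2"
    unfolding reset_threshold_def
  proof (rule Least_equality)
    show "\<exists>w. reset_word (X_states n) (X_alphabet k) (X_delta n k) w \<and> length w = 2*l + 2"
      using up lw by blast
  next
    fix m assume "\<exists>w. reset_word (X_states n) (X_alphabet k) (X_delta n k) w \<and> length w = m"
    thus "2*l + 2 \<le> m" using lo by blast
  qed
  have "2 * X_ell n k + 2 = 2 * (X_ell n k + 1)" by simp
  also have "\<dots> = 2 * nat \<lceil>real n / real (k + 1)\<rceil>" using E(3) by simp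
  finally show ?thesis using sync rt unfolding l_def by simp
qed

end
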